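(* In the setting of the context, let marginal regression select $\{j:|x_j^\top y|>t\}$ with $t=t'\sqrt{2\log p}$ for fixed $t'>0$, and let $\mathrm{FP}_p=\sum_j\mathbb{P}(\beta_j=0,\ j\text{ selected})$, $\mathrm{FN}_p=\sum_j\mathbb{P}(\beta_j=\tau_p,\ j\text{ not selected})$. Then as $p\to\infty$, $\mathrm{FP}_p=L_pp^{1-\min\{t'^2,\ \vartheta+(t'-|\rho|\sqrt r)_+^2\}}$ and $\mathrm{FN}_p=L_pp^{1-\min\{\vartheta+(\sqrt r-t')_+^2,\ 2\vartheta+[(1+\rho)\sqrt r-t']_+^2\}}$.
   Context: Setting: $p\to\infty$; $y=X\beta+z$, $z\sim N(0,I_n)$, $X=[x_1,\dots,x_p]$ with $X^\top X=\mathrm{diag}(B,\dots,B,B_0)$, $B=\begin{pmatrix}1&\rho\\ \rho&1\end{pmatrix}$, $\rho\in(-1,1)$, $B_0=B$ ($p$ even) or $1$ ($p$ odd); $\beta_j$ i.i.d. independent of $z$, $=\tau_p=\sqrt{2r\log p}$ w.p. $p^{-\vartheta}$, $0$ otherwise, $\vartheta\in(0,1)$, $r>0$. $L_p$: generic multi-$\log(p)$ term ($L_pp^{\epsilon}\to\infty$, $L_pp^{-\epsilon}\to0$ for all $\epsilon>0$). *)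

theory Defs
  imports "HOL-Probability.Probability"
begin

text \<open>Gram matrix X^T X = diag(B,...,B,B_0), indices 0..p-1, blocks {2m,2m+1};
  for odd p the last index p-1 forms the 1x1 block B_0 = 1.\<close>
definition block_gram :: "real \<Rightarrow> nat \<Rightarrow> nat \<Rightarrow> real" where
  "block_gram \<rho> j k = (if j = k then 1 else if j div 2 = k div 2 then \<rho> else 0)"

text \<open>Marginal regression score x_j^T y where y = X beta + z
  (X is n x p, given as X i j = entry in row i, column j).\<close>
definition marg_score ::
  "(nat \<Rightarrow> nat \<Rightarrow> real) \<Rightarrow> nat \<Rightarrow> nat \<Rightarrow> (nat \<Rightarrow> 'a \<Rightarrow> real) \<Rightarrow> (nat \<Rightarrow> 'a \<Rightarrow> real)
    \<Rightarrow> nat \<Rightarrow> 'a \<Rightarrow> real" where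
  "marg_score X n p \<beta> z j \<omega> =
     (\<Sum>i<n. X i j * ((\<Sum>k<p. X i k * \<beta> k \<omega>) + z i \<omega>))"

text \<open>A generic multi-log(p) term L_p: L_p p^eps \<rightarrow> \<infinity> and L_p p^(-eps) \<rightarrow> 0 for all eps > 0.
  "f p = L_p p^e" means that f p / p^e is such a term.\<close>
definition multi_log :: "(nat \<Rightarrow> real) \<Rightarrow> bool" where
  "multi_log L \<longleftrightarrow> (\<forall>\<epsilon>>0. filterlim (\<lambda>p. L p * real p powr \<epsilon>) at_top sequentially
                          \<and> (\<lambda>p. L p * real p powr (-\<epsilon>)) \<longlonglongrightarrow> 0)"

end

theory Submission
  imports Defs "HOL-Real_Asymp.Real_Asymp"
begin


lemma P1: "(e::real) > 0 \<Longrightarrow> filterlim (\<lambda>p::nat. real p powr e) at_top sequentially"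
  by real_asymp

lemma P2: "(e::real) > 0 \<Longrightarrow> (\<lambda>p::nat. real p powr (-e)) \<longlonglongrightarrow> 0"
  by real_asymp

lemma P4: "(e::real) > 0 \<Longrightarrow> eventually (\<lambda>p::nat. A * sqrt (ln (real p)) + B \<le> e * ln (real p)) sequentially"
  by real_asymp

lemma P5: "filterlim (\<lambda>p::nat. sqrt (2 * ln (real p))) at_top sequentially"
  by real_asymp

lemma P6: "((\<lambda>x::real. -(1/sqrt(2*pi)) * exp(-x\<^sup>2/2)) \<longlongrightarrow> 0) at_top"
  by real_asymp


definition rate :: "(nat \<Rightarrow> real) \<Rightarrow> real \<Rightarrow> bool" where
  "rate f e \<longleftrightarrow> (\<forall>\<epsilon>>0. eventually (\<lambda>p. real p powr (e - \<epsilon>) \<le> f p \<and> f p \<le> real p powr (e + \<epsilon>)) sequentially)"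

lemma ev_ge1: "eventually (\<lambda>p::nat. 1 \<le> real p) sequentially"
  by (rule eventually_sequentiallyI[of 1]) auto

lemma ev_powr_ge: "(e::real) > 0 \<Longrightarrow> eventually (\<lambda>p::nat. C \<le> real p powr e) sequentially"
  using P1[of e] by (simp add: filterlim_at_top)

lemma rate_I:
  assumes low: "\<And>\<epsilon>. \<epsilon> > 0 \<Longrightarrow> eventually (\<lambda>p. real p powr (e - \<epsilon>) \<le> f p) sequentially"
    and up: "eventually (\<lambda>p. f p \<le> C * real p powr e) sequentially"
  shows "rate f e"
  unfolding rate_def
proof (intro allI impI)
  fix \<epsilon> :: real assume e: "\<epsilon> > 0"
  show "eventually (\<lambda>p. real p powr (e - \<epsilon>) \<le> f p \<and> f p \<le> real p powr (e + \<epsilon>)) sequentially"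
    using low[OF e] up ev_powr_ge[OF e, of C] ev_ge1
  proof eventually_elim
    case (elim p)
    have "C * real p powr e \<le> real p powr \<epsilon> * real p powr e"
      using elim by (intro mult_right_mono) auto
    also have "\<dots> = real p powr (e + \<epsilon>)" using elim by (simp add: powr_add)
    finally show ?case using elim by auto
  qed
qed

lemma rate_squeeze:
  assumes "rate g e" "rate h e" "eventually (\<lambda>p. g p \<le> f p \<and> f p \<le> h p) sequentially"
  shows "rate f e"
  unfolding rate_def
proof (intro allI impI)
  fix \<epsilon> :: real assume e: "\<epsilon> > 0"
  show "eventually (\<lambda>p. real p powr (e - \<epsilon>) \<le> f p \<and> f p \<le> real p powr (e + \<epsilon>)) sequentially"
    using assms(1,2)[unfolded rate_def, rule_format, OF e] assms(3)
    by eventually_elim auto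
qed

lemma rate_pos: "rate f e \<Longrightarrow> eventually (\<lambda>p. 0 < f p) sequentially"
  unfolding rate_def
  apply (drule spec[of _ 1]) apply simp
  apply (rule eventually_mono[OF eventually_conj[OF _ ev_ge1]], assumption)
  by (smt (verit) powr_gt_zero)

lemma rate_mult:
  assumes f: "rate f a" and g: "rate g b"
  shows "rate (\<lambda>p. f p * g p) (a + b)"
  unfolding rate_def
proof (intro allI impI)
  fix \<epsilon> :: real assume e: "\<epsilon> > 0"
  hence e2: "\<epsilon>/2 > 0" by simp
  show "eventually (\<lambda>p. real p powr (a + b - \<epsilon>) \<le> f p * g p \<and> f p * g p \<le> real p powr (a + b + \<epsilon>)) sequentially"
    using f[unfolded rate_def, rule_format, OF e2] g[unfolded rate_def, rule_format, OF e2] ev_ge1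
  proof eventually_elim
    case (elim p)
    have pa: "real p powr (a + b - \<epsilon>) = real p powr (a - \<epsilon>/2) * real p powr (b - \<epsilon>/2)"
      using elim by (simp add: powr_add[symmetric] algebra_simps)
    have pb: "real p powr (a + b + \<epsilon>) = real p powr (a + \<epsilon>/2) * real p powr (b + \<epsilon>/2)"
      using elim by (simp add: powr_add[symmetric] algebra_simps)
    have "0 \<le> f p" "0 \<le> g p" using elim by (smt (verit) powr_ge_zero)+
    then show ?case unfolding pa pb
      using elim by (auto intro!: mult_mono)
  qed
qed

lemma rate_add:
  assumes f: "rate f a" and g: "rate g b"
  shows "rate (\<lambda>p. f p + g p) (max a b)"
  unfolding rate_def
proof (intro allI impI)
  fix \<epsilon> :: real assume e: "\<epsilon> > 0"
  hence e2: "\<epsilon>/2 > 0" by simp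
  show "eventually (\<lambda>p. real p powr (max a b - \<epsilon>) \<le> f p + g p \<and> f p + g p \<le> real p powr (max a b + \<epsilon>)) sequentially"
    using f[unfolded rate_def, rule_format, OF e2] g[unfolded rate_def, rule_format, OF e2] ev_ge1
      f[unfolded rate_def, rule_format, OF e] g[unfolded rate_def, rule_format, OF e] ev_powr_ge[OF e2, of 2]
  proof eventually_elim
    case (elim p)
    have f0: "f p \<ge> 0" "g p \<ge> 0" using elim by (smt (verit) powr_gt_zero)+
    have lo: "real p powr (max a b - \<epsilon>) \<le> f p + g p"
    proof (cases "a \<le> b")
      case True thus ?thesis using elim f0 by (simp add: max_def)
    next
      case False thus ?thesis using elim f0 by (simp add: max_def)
    qed
    have "f p \<le> real p powr (max a b + \<epsilon>/2)"
      using elim(1) order_trans powr_mono[of "a + \<epsilon>/2" "max a b + \<epsilon>/2" "real p"] elim(3) by auto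
    moreover have "g p \<le> real p powr (max a b + \<epsilon>/2)"
      using elim(2) order_trans powr_mono[of "b + \<epsilon>/2" "max a b + \<epsilon>/2" "real p"] elim(3) by auto
    moreover have "2 * real p powr (max a b + \<epsilon>/2) \<le> real p powr (\<epsilon>/2) * real p powr (max a b + \<epsilon>/2)"
      using elim by (intro mult_right_mono) auto
    moreover have "real p powr (\<epsilon>/2) * real p powr (max a b + \<epsilon>/2) = real p powr (max a b + \<epsilon>)"
      using elim by (simp add: powr_add[symmetric] algebra_simps)
    ultimately show ?case using lo by linarith
  qed
qed

lemma rate_const: "(c::real) > 0 \<Longrightarrow> rate (\<lambda>_. c) 0"
  apply (rule rate_I[where C=c])
  subgoal for \<epsilon> using ev_ge1 P2[of \<epsilon>] 
    by (metis (mono_tags, lifting) diff_0 eventually_mono order_tendstoD(2) less_eq_real_def)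
  using ev_ge1 by eventually_elim auto

lemma rate_powr: "rate (\<lambda>p. real p powr e) e"
  apply (rule rate_I[where C=1])
  subgoal for \<epsilon> using ev_ge1 by (rule eventually_mono) (rule powr_mono, auto)
  using ev_ge1 by (auto elim!: eventually_mono)

lemma rate_cong: "rate f e \<Longrightarrow> eventually (\<lambda>p. f p = g p) sequentially \<Longrightarrow> rate g e"
  by (rule rate_squeeze[of f e f]) (auto elim: eventually_mono)

lemma rate_cmult: "c > 0 \<Longrightarrow> rate f e \<Longrightarrow> rate (\<lambda>p. c * f p) e"
  using rate_mult[OF rate_const[of c], of f e] by simp

lemma rate_multi_log:
  assumes "rate f e"
  shows "multi_log (\<lambda>p. f p / real p powr e)"
  unfolding multi_log_def
proof (intro allI impI conjI)
  fix \<epsilon> :: real assume e: "\<epsilon> > 0"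
  hence e2: "\<epsilon>/2 > 0" by simp
  have ev: "eventually (\<lambda>p. real p powr (-\<epsilon>/2) \<le> f p / real p powr e \<and> f p / real p powr e \<le> real p powr (\<epsilon>/2)) sequentially"
    using assms[unfolded rate_def, rule_format, OF e2] ev_ge1
  proof eventually_elim
    case (elim p)
    have pp: "real p powr e > 0" using elim by simp
    have "real p powr (-\<epsilon>/2) * real p powr e = real p powr (e - \<epsilon>/2)"
      "real p powr (\<epsilon>/2) * real p powr e = real p powr (e + \<epsilon>/2)"
      using elim by (simp_all add: powr_add[symmetric] algebra_simps)
    thus ?case using elim pp by (simp add: divide_simps)
  qed
  show "filterlim (\<lambda>p. f p / real p powr e * real p powr \<epsilon>) at_top sequentially"
  proof (rule filterlim_at_top_mono[OF P1[OF e2]])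
    show "eventually (\<lambda>p. real p powr (\<epsilon>/2) \<le> f p / real p powr e * real p powr \<epsilon>) sequentially"
      using ev ev_ge1
    proof eventually_elim
      case (elim p)
      have "real p powr (\<epsilon>/2) = real p powr (-\<epsilon>/2) * real p powr \<epsilon>"
        using elim by (simp add: powr_add[symmetric] algebra_simps)
      also have "\<dots> \<le> f p / real p powr e * real p powr \<epsilon>"
        using elim by (intro mult_right_mono) auto
      finally show ?case .
    qed
  qed
  show "(\<lambda>p. f p / real p powr e * real p powr (-\<epsilon>)) \<longlonglongrightarrow> 0"
  proof (rule tendsto_sandwich[OF _ _ tendsto_const P2[OF e2]])
    show "eventually (\<lambda>p. 0 \<le> f p / real p powr e * real p powr (-\<epsilon>)) sequentially"
      using ev ev_ge1 by eventually_elim (smt (verit) powr_gt_zero mult_nonneg_nonneg)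
    show "eventually (\<lambda>p. f p / real p powr e * real p powr (-\<epsilon>) \<le> real p powr (-(\<epsilon>/2))) sequentially"
      using ev ev_ge1
    proof eventually_elim
      case (elim p)
      have "f p / real p powr e * real p powr (-\<epsilon>) \<le> real p powr (\<epsilon>/2) * real p powr (-\<epsilon>)"
        using elim by (intro mult_right_mono) auto
      also have "\<dots> = real p powr (-(\<epsilon>/2))" using elim by (simp add: powr_add[symmetric] algebra_simps)
      finally show ?case .
    qed
  qed
qed


definition stdN :: "real measure" where
  "stdN = density lborel (\<lambda>x. ennreal (std_normal_density x))"

lemma prob_stdN: "prob_space stdN"
  unfolding stdN_def by (rule Distributions.prob_space_normal_density) simp

lemma sets_stdN[simp]: "sets stdN = sets borel" and space_stdN[simp]: "space stdN = UNIV"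
  unfolding stdN_def by auto

lemma emeasure_stdN: "A \<in> sets borel \<Longrightarrow> emeasure stdN A = (\<integral>\<^sup>+x. ennreal (std_normal_density x) * indicator A x \<partial>lborel)"
  unfolding stdN_def by (simp add: emeasure_density)

lemma stdN_deriv: "DERIV (\<lambda>x. - std_normal_density x) x :> x * std_normal_density x"
  unfolding std_normal_density_def
  by (auto intro!: derivative_eq_intros simp: field_simps power2_eq_square)

lemma gauss_upper:
  assumes a: "a \<ge> 1"
  shows "measure stdN {a..} \<le> exp (-a\<^sup>2/2)"
proof -
  have "emeasure stdN {a..} = (\<integral>\<^sup>+x. ennreal (std_normal_density x) * indicator {a..} x \<partial>lborel)"
    by (simp add: emeasure_stdN)
  also have "\<dots> \<le> (\<integral>\<^sup>+x. ennreal (x * std_normal_density x) * indicator {a..} x \<partial>lborel)"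
  proof (rule nn_integral_mono)
    fix x show "ennreal (std_normal_density x) * indicator {a..} x \<le> ennreal (x * std_normal_density x) * indicator {a..} x"
    proof (cases "a \<le> x")
      case True
      have "std_normal_density x \<le> x * std_normal_density x"
        using mult_right_mono[of 1 x "std_normal_density x"] True a by simp
      thus ?thesis using True by (auto intro!: ennreal_leI simp: indicator_def)
    qed simp
  qed
  also have "\<dots> = ennreal (0 - (- std_normal_density a))"
  proof (rule nn_integral_FTC_atLeast)
    show "(\<lambda>x. x * std_normal_density x) \<in> borel_measurable borel" by measurable
    show "\<And>x. a \<le> x \<Longrightarrow> DERIV (\<lambda>x. - std_normal_density x) x :> x * std_normal_density x"
      by (rule stdN_deriv)
    show "\<And>x. a \<le> x \<Longrightarrow> 0 \<le> x * std_normal_density x" using a by auto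
    show "((\<lambda>x. - std_normal_density x) \<longlongrightarrow> 0) at_top"
      using P6 by (simp add: std_normal_density_def)
  qed
  finally have "measure stdN {a..} \<le> std_normal_density a"
    by (simp add: measure_def enn2real_leI)
  also have "\<dots> \<le> exp (-a\<^sup>2/2)"
  proof -
    have "1 \<le> sqrt (2*pi)" using pi_gt3 by simp
    hence "1 / sqrt (2*pi) \<le> 1" by simp
    thus ?thesis unfolding std_normal_density_def
      using mult_right_mono[of "1 / sqrt (2*pi)" 1 "exp (-a\<^sup>2/2)"] by simp
  qed
  finally show ?thesis .
qed

lemma stdN_sym:
  assumes A: "A \<in> sets borel"
  shows "measure stdN (uminus -` A) = measure stdN A"
proof -
  have um: "(uminus :: real \<Rightarrow> real) \<in> borel_measurable borel" by measurable
  have B: "uminus -` A \<in> sets borel" using measurable_sets[OF um A] by simp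
  have "emeasure stdN (uminus -` A) = (\<integral>\<^sup>+x. ennreal (std_normal_density x) * indicator (uminus -` A) x \<partial>lborel)"
    using B by (simp add: emeasure_stdN)
  also have "\<dots> = (\<integral>\<^sup>+x. ennreal (std_normal_density (- x)) * indicator A (- x) \<partial>lborel)"
    by (intro nn_integral_cong) (simp add: std_normal_density_def indicator_def)
  also have "\<dots> = (\<integral>\<^sup>+x. ennreal (std_normal_density x) * indicator A x \<partial>distr lborel borel uminus)"
    using A by (subst nn_integral_distr) auto
  also have "\<dots> = emeasure stdN A"
    using A by (simp add: lborel_distr_uminus emeasure_stdN)
  finally show ?thesis by (simp add: measure_def)
qed

lemma gauss_upper_left:
  assumes a: "a \<ge> 1"
  shows "measure stdN {..-a} \<le> exp (-a\<^sup>2/2)"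
proof -
  have "uminus -` {a..} = {..-a}" by auto
  hence "measure stdN {..-a} = measure stdN {a..}" using stdN_sym[of "{a..}"] by simp
  thus ?thesis using gauss_upper[OF a] by simp
qed

lemma gauss_lower:
  "measure stdN {u..u+1} \<ge> std_normal_density (\<bar>u\<bar>+1)"
proof -
  have "ennreal (std_normal_density (\<bar>u\<bar>+1)) = (\<integral>\<^sup>+x. ennreal (std_normal_density (\<bar>u\<bar>+1)) * indicator {u..u+1} x \<partial>lborel)"
    by (simp add: nn_integral_cmult_indicator)
  also have "\<dots> \<le> (\<integral>\<^sup>+x. ennreal (std_normal_density x) * indicator {u..u+1} x \<partial>lborel)"
  proof (rule nn_integral_mono)
    fix x
    show "ennreal (std_normal_density (\<bar>u\<bar>+1)) * indicator {u..u+1} x \<le> ennreal (std_normal_density x) * indicator {u..u+1} x"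
    proof (cases "x \<in> {u..u+1}")
      case True
      hence "\<bar>x\<bar> \<le> \<bar>u\<bar> + 1" by auto
      hence "x\<^sup>2 \<le> (\<bar>u\<bar>+1)\<^sup>2" by (metis abs_ge_zero power2_abs power_mono)
      hence "std_normal_density (\<bar>u\<bar>+1) \<le> std_normal_density x"
        unfolding std_normal_density_def by (intro mult_left_mono) auto
      thus ?thesis using True by (auto intro: ennreal_leI)
    qed simp
  qed
  also have "\<dots> = emeasure stdN {u..u+1}" by (simp add: emeasure_stdN)
  also have "\<dots> = ennreal (measure stdN {u..u+1})"
  proof -
    interpret N: prob_space stdN by (rule prob_stdN)
    show ?thesis by (simp add: N.emeasure_eq_measure)
  qed
  finally show ?thesis by (simp add: ennreal_le_iff)
qed


abbreviation sp :: "nat \<Rightarrow> real" where "sp p \<equiv> sqrt (2 * ln (real p))"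

lemma sp_sq: "p \<ge> 1 \<Longrightarrow> (sp p)\<^sup>2 = 2 * ln (real p)"
  by simp

lemma sp_nonneg: "sp p \<ge> 0"
  by (cases "p = 0") auto

lemma ev_sp_ge: "eventually (\<lambda>p. K \<le> sp p) sequentially"
  using P5 by (simp add: filterlim_at_top)

lemma exp_s: assumes "p \<ge> 1" shows "exp (-(c * sp p)\<^sup>2/2) = real p powr (-c\<^sup>2)"
proof -
  have "(c * sp p)\<^sup>2 = c\<^sup>2 * (2 * ln (real p))" using assms by (simp add: power_mult_distrib)
  thus ?thesis using assms by (simp add: powr_def)
qed

lemma phi_low:
  assumes e: "\<epsilon> > 0"
  shows "eventually (\<lambda>p. real p powr (-d\<^sup>2 - \<epsilon>) \<le> std_normal_density (d * sp p + k)) sequentially"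
  using P4[OF e, of "2 * \<bar>d * k\<bar> * sqrt 2" "k\<^sup>2/2 + ln (sqrt (2*pi))"] ev_ge1
proof eventually_elim
  case (elim p)
  have s2: "sp p = sqrt 2 * sqrt (ln (real p))" by (simp add: real_sqrt_mult)
  have "d * k * sp p \<le> \<bar>d * k\<bar> * sp p"
    using sp_nonneg[of p] by (intro mult_right_mono) auto
  have ss: "sp p * sp p = 2 * ln (real p)" using elim by simp
  have eq: "(d * sp p + k)\<^sup>2 / 2 = d\<^sup>2 * ln (real p) + d * k * sp p + k\<^sup>2/2"
  proof -
    have "(d * sp p + k)\<^sup>2 = d\<^sup>2 * (sp p * sp p) + 2 * (d * k * sp p) + k\<^sup>2"
      by (simp add: power2_eq_square algebra_simps)
    thus ?thesis unfolding ss by simp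
  qed
  define Y where "Y = \<bar>d * k\<bar> * sqrt 2 * sqrt (ln (real p))"
  have Y0: "Y \<ge> 0" unfolding Y_def using elim by simp
  have H1: "d * k * sp p \<le> Y" unfolding Y_def
    using \<open>d * k * sp p \<le> _\<close> by (simp add: s2 mult.assoc)
  have H2: "2 * Y + (k\<^sup>2/2 + ln (sqrt (2*pi))) \<le> \<epsilon> * ln (real p)"
    using elim(1) unfolding Y_def by (simp add: mult.assoc)
  have "(d * sp p + k)\<^sup>2 / 2 + ln (sqrt (2*pi)) \<le> d\<^sup>2 * ln (real p) + \<epsilon> * ln (real p)"
    unfolding eq using H1 H2 Y0 by linarith
  hence "(-d\<^sup>2 - \<epsilon>) * ln (real p) \<le> - (d * sp p + k)\<^sup>2 / 2 - ln (sqrt (2*pi))"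
    by (simp add: algebra_simps)
  hence "exp ((-d\<^sup>2 - \<epsilon>) * ln (real p)) \<le> exp (- (d * sp p + k)\<^sup>2 / 2 - ln (sqrt (2*pi)))"
    by simp
  also have "\<dots> = std_normal_density (d * sp p + k)"
    unfolding std_normal_density_def by (simp add: exp_diff)
  finally show ?case using elim by (simp add: powr_def)
qed

lemma Q_le1: "measure stdN A \<le> 1"
  by (rule prob_space.prob_le_1[OF prob_stdN])

lemma Q_mono: "A \<subseteq> B \<Longrightarrow> B \<in> sets borel \<Longrightarrow> measure stdN A \<le> measure stdN B"
  by (rule finite_measure.finite_measure_mono[OF prob_space.finite_measure[OF prob_stdN]]) auto

lemma Q_Un: "A \<in> sets borel \<Longrightarrow> B \<in> sets borel \<Longrightarrow> measure stdN (A \<union> B) \<le> measure stdN A + measure stdN B"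
  by (rule measure_Un_le) auto

lemma rate_Aout:
  assumes b: "b > 0"
  shows "rate (\<lambda>p. measure stdN {x. b * sp p < \<bar>a * sp p + x\<bar>}) (-(max 0 (b - \<bar>a\<bar>))\<^sup>2)"
proof -
  define d where "d = max 0 (b - \<bar>a\<bar>)"
  have d0: "d \<ge> 0" by (simp add: d_def)
  have meas: "{x. b * sp p < \<bar>a * sp p + x\<bar>} \<in> sets borel" for p by measurable
  show ?thesis unfolding d_def[symmetric]
  proof (rule rate_I[where C=2])
    fix \<epsilon> :: real assume e: "\<epsilon> > 0"
    show "eventually (\<lambda>p. real p powr (-d\<^sup>2 - \<epsilon>) \<le> measure stdN {x. b * sp p < \<bar>a * sp p + x\<bar>}) sequentially"
    proof (cases "a \<ge> 0")
      case True
      show ?thesis using phi_low[OF e, of d 2]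
      proof eventually_elim
        case (elim p)
        have sub: "{d * sp p + 1 .. d * sp p + 1 + 1} \<subseteq> {x. b * sp p < \<bar>a * sp p + x\<bar>}"
        proof
          fix x assume x: "x \<in> {d * sp p + 1 .. d * sp p + 1 + 1}"
          have "b * sp p \<le> (a + d) * sp p" using True d_def sp_nonneg[of p]
            by (intro mult_right_mono) auto
          thus "x \<in> {x. b * sp p < \<bar>a * sp p + x\<bar>}" using x True sp_nonneg[of p] d0
            by (auto simp: algebra_simps)
        qed
        have "\<bar>d * sp p + 1\<bar> + 1 = d * sp p + 2" using mult_nonneg_nonneg[OF d0 sp_nonneg[of p]] by simp
        hence "std_normal_density (d * sp p + 2) = std_normal_density (\<bar>d * sp p + 1\<bar> + 1)"
          by (intro arg_cong[where f=std_normal_density]) simp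
        also have "\<dots> \<le> measure stdN {d * sp p + 1 .. d * sp p + 1 + 1}" by (rule gauss_lower)
        also have "\<dots> \<le> measure stdN {x. b * sp p < \<bar>a * sp p + x\<bar>}" by (rule Q_mono[OF sub meas])
        finally show ?case using elim by simp
      qed
    next
      case False
      show ?thesis using phi_low[OF e, of d 3]
      proof eventually_elim
        case (elim p)
        have sub: "{-(d * sp p + 2) .. -(d * sp p + 2) + 1} \<subseteq> {x. b * sp p < \<bar>a * sp p + x\<bar>}"
        proof
          fix x assume x: "x \<in> {-(d * sp p + 2) .. -(d * sp p + 2) + 1}"
          have "b * sp p \<le> (d - a) * sp p" using False d_def sp_nonneg[of p]
            by (intro mult_right_mono) auto
          thus "x \<in> {x. b * sp p < \<bar>a * sp p + x\<bar>}" using x False sp_nonneg[of p] d0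
            by (auto simp: algebra_simps)
        qed
        have "\<bar>-(d * sp p + 2)\<bar> + 1 = d * sp p + 3" using mult_nonneg_nonneg[OF d0 sp_nonneg[of p]] by simp
        hence "std_normal_density (d * sp p + 3) = std_normal_density (\<bar>-(d * sp p + 2)\<bar> + 1)"
          by (intro arg_cong[where f=std_normal_density]) simp
        also have "\<dots> \<le> measure stdN {-(d * sp p + 2) .. -(d * sp p + 2) + 1}" by (rule gauss_lower)
        also have "\<dots> \<le> measure stdN {x. b * sp p < \<bar>a * sp p + x\<bar>}" by (rule Q_mono[OF sub meas])
        finally show ?case using elim by simp
      qed
    qed
  next
    show "eventually (\<lambda>p. measure stdN {x. b * sp p < \<bar>a * sp p + x\<bar>} \<le> 2 * real p powr (-d\<^sup>2)) sequentially"
    proof (cases "d = 0")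
      case True
      show ?thesis using ev_ge1
      proof eventually_elim
        case (elim p)
        show ?case using Q_le1[of "{x. b * sp p < \<bar>a * sp p + x\<bar>}"] Q_le1[of "{x. \<not> b * sp p < \<bar>a * sp p + x\<bar>}"] True elim by simp
      qed
    next
      case False
      hence dpos: "d > 0" using d0 by simp
      show ?thesis using ev_ge1 ev_sp_ge[of "1/d"]
      proof eventually_elim
        case (elim p)
        have ds: "d * sp p \<ge> 1" using elim dpos by (simp add: field_simps)
        have dd: "d = b - \<bar>a\<bar>" using False d_def by (simp add: max_def split: if_splits)
        have sub: "{x. b * sp p < \<bar>a * sp p + x\<bar>} \<subseteq> {d * sp p ..} \<union> {..-(d * sp p)}"
        proof
          fix x assume x: "x \<in> {x. b * sp p < \<bar>a * sp p + x\<bar>}"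
          have "\<bar>a\<bar> * sp p + d * sp p = b * sp p" unfolding dd by (simp add: algebra_simps)
          moreover have "\<bar>a * sp p\<bar> = \<bar>a\<bar> * sp p" using sp_nonneg[of p] by (simp add: abs_mult)
          ultimately show "x \<in> {d * sp p ..} \<union> {..-(d * sp p)}" using x by (auto simp: abs_if split: if_splits)
        qed
        have "measure stdN {x. b * sp p < \<bar>a * sp p + x\<bar>} \<le> measure stdN ({d * sp p ..} \<union> {..-(d * sp p)})"
          by (rule Q_mono[OF sub]) auto
        also have "\<dots> \<le> measure stdN {d * sp p ..} + measure stdN {..-(d * sp p)}" by (rule Q_Un) auto
        also have "\<dots> \<le> exp (-(d * sp p)\<^sup>2/2) + exp (-(d * sp p)\<^sup>2/2)"
          using gauss_upper[OF ds] gauss_upper_left[OF ds] by simp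
        also have "\<dots> = 2 * real p powr (-d\<^sup>2)" using exp_s[of p d] elim(1) by simp
        finally show ?case .
      qed
    qed
  qed
qed

lemma rate_Ain:
  assumes a: "a > 0" and b: "b > 0"
  shows "rate (\<lambda>p. measure stdN {x. \<not> b * sp p < \<bar>a * sp p + x\<bar>}) (-(max 0 (a - b))\<^sup>2)"
proof -
  define d where "d = max 0 (a - b)"
  have d0: "d \<ge> 0" by (simp add: d_def)
  have meas: "{x. \<not> b * sp p < \<bar>a * sp p + x\<bar>} \<in> sets borel" for p by measurable
  have abd: "a + b - d > 0" using a b by (simp add: d_def max_def)
  show ?thesis unfolding d_def[symmetric]
  proof (rule rate_I[where C=1])
    fix \<epsilon> :: real assume e: "\<epsilon> > 0"
    show "eventually (\<lambda>p. real p powr (-d\<^sup>2 - \<epsilon>) \<le> measure stdN {x. \<not> b * sp p < \<bar>a * sp p + x\<bar>}) sequentially"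
      using phi_low[OF e, of d 2] ev_sp_ge[of "1/(a + b - d)"]
    proof eventually_elim
      case (elim p)
      have big: "(a + b - d) * sp p \<ge> 1" using elim abd by (simp add: field_simps)
      have sub: "{-(d * sp p) - 1 .. -(d * sp p) - 1 + 1} \<subseteq> {x. \<not> b * sp p < \<bar>a * sp p + x\<bar>}"
      proof
        fix x assume x: "x \<in> {-(d * sp p) - 1 .. -(d * sp p) - 1 + 1}"
        have "(a - d) * sp p \<le> b * sp p" using d_def sp_nonneg[of p]
          by (intro mult_right_mono) auto
        thus "x \<in> {x. \<not> b * sp p < \<bar>a * sp p + x\<bar>}" using x big
          by (auto simp: algebra_simps abs_if)
      qed
      have "\<bar>-(d * sp p) - 1\<bar> + 1 = d * sp p + 2" using mult_nonneg_nonneg[OF d0 sp_nonneg[of p]] by simp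
      hence "std_normal_density (d * sp p + 2) = std_normal_density (\<bar>-(d * sp p) - 1\<bar> + 1)"
        by (intro arg_cong[where f=std_normal_density]) simp
      also have "\<dots> \<le> measure stdN {-(d * sp p) - 1 .. -(d * sp p) - 1 + 1}" by (rule gauss_lower)
      also have "\<dots> \<le> measure stdN {x. \<not> b * sp p < \<bar>a * sp p + x\<bar>}" by (rule Q_mono[OF sub meas])
      finally show ?case using elim by simp
    qed
  next
    show "eventually (\<lambda>p. measure stdN {x. \<not> b * sp p < \<bar>a * sp p + x\<bar>} \<le> 1 * real p powr (-d\<^sup>2)) sequentially"
    proof (cases "d = 0")
      case True
      show ?thesis using ev_ge1
      proof eventually_elim
        case (elim p)
        show ?case using Q_le1[of "{x. b * sp p < \<bar>a * sp p + x\<bar>}"] Q_le1[of "{x. \<not> b * sp p < \<bar>a * sp p + x\<bar>}"] True elim by simp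
      qed
    next
      case False
      hence dpos: "d > 0" using d0 by simp
      show ?thesis using ev_ge1 ev_sp_ge[of "1/d"]
      proof eventually_elim
        case (elim p)
        have ds: "d * sp p \<ge> 1" using elim dpos by (simp add: field_simps)
        have dd: "d = a - b" using False d_def by (simp add: max_def split: if_splits)
        have sub: "{x. \<not> b * sp p < \<bar>a * sp p + x\<bar>} \<subseteq> {..-(d * sp p)}"
          using dd by (auto simp: algebra_simps abs_if split: if_splits)
        have "measure stdN {x. \<not> b * sp p < \<bar>a * sp p + x\<bar>} \<le> measure stdN {..-(d * sp p)}"
          by (rule Q_mono[OF sub]) auto
        also have "\<dots> \<le> exp (-(d * sp p)\<^sup>2/2)"
          using gauss_upper_left[OF ds] by simp
        also have "\<dots> = real p powr (-d\<^sup>2)" using exp_s[of p d] elim(1) by simp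
        finally show ?case by simp
      qed
    qed
  qed
qed


lemma indep_group:
  assumes P: "prob_space M" and ind: "prob_space.indep_vars M (\<lambda>_. borel) V I"
    and K: "\<And>l. l \<in> L \<Longrightarrow> K l \<subseteq> I" and D: "disjoint_family_on K L"
    and f: "\<And>l. l \<in> L \<Longrightarrow> f l \<in> borel_measurable (PiM (K l) (\<lambda>_. borel))"
  shows "prob_space.indep_vars M (\<lambda>_. borel) (\<lambda>l \<omega>. f l (restrict (\<lambda>i. V i \<omega>) (K l))) L"
proof -
  interpret prob_space M by (rule P)
  have "indep_vars (\<lambda>j. PiM (K j) (\<lambda>_. borel)) (\<lambda>j \<omega>. restrict (\<lambda>i. V i \<omega>) (K j)) L"
    by (rule indep_vars_restrict[OF ind K D])
  thus ?thesis by (rule indep_vars_compose2) (rule f)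
qed

definition W3 :: "(nat \<Rightarrow> 'a \<Rightarrow> real) \<Rightarrow> (nat \<Rightarrow> 'a \<Rightarrow> real) \<Rightarrow> (nat \<Rightarrow> real) \<Rightarrow> nat \<Rightarrow> nat \<Rightarrow> nat \<Rightarrow> nat \<Rightarrow> 'a \<Rightarrow> real" where
  "W3 \<beta> z c n j k l \<omega> = (if l = 0 then \<beta> j \<omega> else if l = 1 then \<beta> k \<omega> else (\<Sum>i<n. c i * z i \<omega>))"

lemma indep_W3:
  fixes \<beta> z :: "nat \<Rightarrow> 'a \<Rightarrow> real" and n p :: nat
  assumes P: "prob_space M"
    and ind: "prob_space.indep_vars M (\<lambda>_. borel) (\<lambda>v. case v of Inl j \<Rightarrow> \<beta> j | Inr i \<Rightarrow> z i) ({..<p} <+> {..<n})"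
    and j: "j < p" and k: "k < p" "k \<noteq> j"
  shows "prob_space.indep_vars M (\<lambda>_. borel) (W3 \<beta> z c n j k) {0,1,2}"
proof -
  interpret prob_space M by (rule P)
  define K where "K = (\<lambda>l::nat. if l = 0 then {Inl j} else if l = 1 then {Inl k} else (Inr ` {..<n} :: (nat + nat) set))"
  define f where "f = (\<lambda>l::nat. \<lambda>g::(nat+nat) \<Rightarrow> real. if l = 0 then g (Inl j) else if l = 1 then g (Inl k) else (\<Sum>i<n. c i * g (Inr i)))"
  have "indep_vars (\<lambda>_. borel) (\<lambda>l \<omega>. f l (restrict (\<lambda>i. (case i of Inl j \<Rightarrow> \<beta> j | Inr i \<Rightarrow> z i) \<omega>) (K l))) {0,1,2}"
  proof (rule indep_group[OF P ind])
    show "\<And>l. l \<in> {0, 1, 2} \<Longrightarrow> K l \<subseteq> {..<p} <+> {..<n}" using j k by (auto simp: K_def)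
    show "disjoint_family_on K {0, 1, 2}" using k by (auto simp: K_def disjoint_family_on_def)
    fix l :: nat assume l: "l \<in> {0,1,2}"
    show "f l \<in> borel_measurable (Pi\<^sub>M (K l) (\<lambda>_. borel))"
    proof -
      consider "l = 0" | "l = 1" | "l = 2" using l by auto
      thus ?thesis
      proof cases
        case 1 thus ?thesis by (simp add: f_def K_def)
      next
        case 2 thus ?thesis by (simp add: f_def K_def)
      next
        case 3
        have "(\<lambda>g::(nat+nat) \<Rightarrow> real. \<Sum>i<n. c i * g (Inr i)) \<in> borel_measurable (Pi\<^sub>M (Inr ` {..<n}) (\<lambda>_. borel))"
          by (intro borel_measurable_sum borel_measurable_times measurable_const measurable_component_singleton) auto
        thus ?thesis using 3 by (simp add: f_def K_def)
      qed
    qed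
  qed
  moreover have "(\<lambda>l \<omega>. f l (restrict (\<lambda>i. (case i of Inl j \<Rightarrow> \<beta> j | Inr i \<Rightarrow> z i) \<omega>) (K l))) = W3 \<beta> z c n j k"
    by (auto simp: fun_eq_iff f_def K_def W3_def intro!: sum.cong)
  ultimately show ?thesis by simp
qed

lemma prob3:
  fixes \<beta> z :: "nat \<Rightarrow> 'a \<Rightarrow> real" and n p :: nat
  assumes P: "prob_space M"
    and ind: "prob_space.indep_vars M (\<lambda>_. borel) (\<lambda>v. case v of Inl j \<Rightarrow> \<beta> j | Inr i \<Rightarrow> z i) ({..<p} <+> {..<n})"
    and j: "j < p" and k: "k < p" "k \<noteq> j"
    and A: "A \<in> sets borel" and B: "B \<in> sets borel" and C: "C \<in> sets borel"
  shows "measure M {\<omega> \<in> space M. \<beta> j \<omega> \<in> A \<and> \<beta> k \<omega> \<in> B \<and> (\<Sum>i<n. c i * z i \<omega>) \<in> C}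
       = measure M {\<omega> \<in> space M. \<beta> j \<omega> \<in> A} * measure M {\<omega> \<in> space M. \<beta> k \<omega> \<in> B}
         * measure M {\<omega> \<in> space M. (\<Sum>i<n. c i * z i \<omega>) \<in> C}"
proof -
  interpret prob_space M by (rule P)
  define S where "S = (\<lambda>l::nat. if l = 0 then A else if l = 1 then B else C)"
  have "prob (\<Inter>l\<in>{0,1,2}. W3 \<beta> z c n j k l -` S l \<inter> space M) = (\<Prod>l\<in>{0,1,2}. prob (W3 \<beta> z c n j k l -` S l \<inter> space M))"
    by (rule indep_varsD[OF indep_W3[OF P ind j k]]) (auto simp: S_def A B C)
  moreover have "(\<Inter>l\<in>{0,1,2}. W3 \<beta> z c n j k l -` S l \<inter> space M) = {\<omega> \<in> space M. \<beta> j \<omega> \<in> A \<and> \<beta> k \<omega> \<in> B \<and> (\<Sum>i<n. c i * z i \<omega>) \<in> C}"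
    by (auto simp: W3_def S_def)
  moreover have "W3 \<beta> z c n j k 0 -` S 0 \<inter> space M = {\<omega> \<in> space M. \<beta> j \<omega> \<in> A}"
    "W3 \<beta> z c n j k 1 -` S 1 \<inter> space M = {\<omega> \<in> space M. \<beta> k \<omega> \<in> B}"
    "W3 \<beta> z c n j k 2 -` S 2 \<inter> space M = {\<omega> \<in> space M. (\<Sum>i<n. c i * z i \<omega>) \<in> C}"
    by (auto simp: W3_def S_def)
  ultimately show ?thesis by (simp add: mult.assoc)
qed

definition W2 :: "(nat \<Rightarrow> 'a \<Rightarrow> real) \<Rightarrow> (nat \<Rightarrow> 'a \<Rightarrow> real) \<Rightarrow> (nat \<Rightarrow> real) \<Rightarrow> nat \<Rightarrow> nat \<Rightarrow> nat \<Rightarrow> 'a \<Rightarrow> real" where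
  "W2 \<beta> z c n j l \<omega> = (if l = 0 then \<beta> j \<omega> else (\<Sum>i<n. c i * z i \<omega>))"

lemma prob2:
  fixes \<beta> z :: "nat \<Rightarrow> 'a \<Rightarrow> real" and n p :: nat
  assumes P: "prob_space M"
    and ind: "prob_space.indep_vars M (\<lambda>_. borel) (\<lambda>v. case v of Inl j \<Rightarrow> \<beta> j | Inr i \<Rightarrow> z i) ({..<p} <+> {..<n})"
    and j: "j < p"
    and A: "A \<in> sets borel" and C: "C \<in> sets borel"
  shows "measure M {\<omega> \<in> space M. \<beta> j \<omega> \<in> A \<and> (\<Sum>i<n. c i * z i \<omega>) \<in> C}
       = measure M {\<omega> \<in> space M. \<beta> j \<omega> \<in> A} * measure M {\<omega> \<in> space M. (\<Sum>i<n. c i * z i \<omega>) \<in> C}"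
proof -
  interpret prob_space M by (rule P)
  define K where "K = (\<lambda>l::nat. if l = 0 then {Inl j} else (Inr ` {..<n} :: (nat + nat) set))"
  define f where "f = (\<lambda>l::nat. \<lambda>g::(nat+nat) \<Rightarrow> real. if l = 0 then g (Inl j) else (\<Sum>i<n. c i * g (Inr i)))"
  have "indep_vars (\<lambda>_. borel) (\<lambda>l \<omega>. f l (restrict (\<lambda>i. (case i of Inl j \<Rightarrow> \<beta> j | Inr i \<Rightarrow> z i) \<omega>) (K l))) {0,1}"
  proof (rule indep_group[OF P ind])
    show "\<And>l. l \<in> {0, 1} \<Longrightarrow> K l \<subseteq> {..<p} <+> {..<n}" using j by (auto simp: K_def)
    show "disjoint_family_on K {0, 1}" by (auto simp: K_def disjoint_family_on_def)
    fix l :: nat assume l: "l \<in> {0,1}"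
    show "f l \<in> borel_measurable (Pi\<^sub>M (K l) (\<lambda>_. borel))"
    proof (cases "l = 0")
      case True thus ?thesis by (simp add: f_def K_def)
    next
      case False
      have "(\<lambda>g::(nat+nat) \<Rightarrow> real. \<Sum>i<n. c i * g (Inr i)) \<in> borel_measurable (Pi\<^sub>M (Inr ` {..<n}) (\<lambda>_. borel))"
        by (intro borel_measurable_sum borel_measurable_times measurable_const measurable_component_singleton) auto
      thus ?thesis using False by (simp add: f_def K_def)
    qed
  qed
  moreover have "(\<lambda>l \<omega>. f l (restrict (\<lambda>i. (case i of Inl j \<Rightarrow> \<beta> j | Inr i \<Rightarrow> z i) \<omega>) (K l))) = W2 \<beta> z c n j"
    by (auto simp: fun_eq_iff f_def K_def W2_def intro!: sum.cong)
  ultimately have iv: "indep_vars (\<lambda>_. borel) (W2 \<beta> z c n j) {0,1}" by simp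
  define S where "S = (\<lambda>l::nat. if l = 0 then A else C)"
  have "prob (\<Inter>l\<in>{0,1}. W2 \<beta> z c n j l -` S l \<inter> space M) = (\<Prod>l\<in>{0,1}. prob (W2 \<beta> z c n j l -` S l \<inter> space M))"
    by (rule indep_varsD[OF iv]) (auto simp: S_def A C)
  moreover have "(\<Inter>l\<in>{0,1}. W2 \<beta> z c n j l -` S l \<inter> space M) = {\<omega> \<in> space M. \<beta> j \<omega> \<in> A \<and> (\<Sum>i<n. c i * z i \<omega>) \<in> C}"
    by (auto simp: W2_def S_def)
  moreover have "W2 \<beta> z c n j 0 -` S 0 \<inter> space M = {\<omega> \<in> space M. \<beta> j \<omega> \<in> A}"
    "W2 \<beta> z c n j 1 -` S 1 \<inter> space M = {\<omega> \<in> space M. (\<Sum>i<n. c i * z i \<omega>) \<in> C}"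
    by (auto simp: W2_def S_def)
  ultimately show ?thesis by simp
qed


lemma w_normal:
  fixes \<beta> z :: "nat \<Rightarrow> 'a \<Rightarrow> real" and n p :: nat
  assumes P: "prob_space M"
    and ind: "prob_space.indep_vars M (\<lambda>_. borel) (\<lambda>v. case v of Inl j \<Rightarrow> \<beta> j | Inr i \<Rightarrow> z i) ({..<p} <+> {..<n})"
    and noise: "\<And>i. i < n \<Longrightarrow> distributed M lborel (z i) (\<lambda>x. ennreal (std_normal_density x))"
    and c: "(\<Sum>i<n. c i * c i) = 1"
  shows "distributed M lborel (\<lambda>\<omega>. \<Sum>i<n. c i * z i \<omega>) (\<lambda>x. ennreal (std_normal_density x))"
proof -
  interpret prob_space M by (rule P)
  define I where "I = {i. i < n \<and> c i \<noteq> 0}"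
  have fin: "finite I" by (simp add: I_def)
  have ne: "I \<noteq> {}"
  proof
    assume "I = {}"
    hence "\<And>i. i < n \<Longrightarrow> c i = 0" by (auto simp: I_def)
    hence "(\<Sum>i<n. c i * c i) = 0" by simp
    with c show False by simp
  qed
  have sub: "I \<subseteq> {..<n}" by (auto simp: I_def)
  define K where "K = (\<lambda>i::nat. {Inr i :: nat + nat})"
  define f where "f = (\<lambda>i::nat. \<lambda>g::(nat+nat) \<Rightarrow> real. c i * g (Inr i))"
  have "indep_vars (\<lambda>_. borel) (\<lambda>l \<omega>. f l (restrict (\<lambda>i. (case i of Inl j \<Rightarrow> \<beta> j | Inr i \<Rightarrow> z i) \<omega>) (K l))) I"
  proof (rule indep_group[OF P ind])
    show "\<And>l. l \<in> I \<Longrightarrow> K l \<subseteq> {..<p} <+> {..<n}" by (auto simp: K_def I_def)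
    show "disjoint_family_on K I" by (auto simp: K_def disjoint_family_on_def)
    fix l assume "l \<in> I"
    show "f l \<in> borel_measurable (Pi\<^sub>M (K l) (\<lambda>_. borel))"
      unfolding f_def K_def
      by (intro borel_measurable_times measurable_const measurable_component_singleton) auto
  qed
  moreover have "(\<lambda>l \<omega>. f l (restrict (\<lambda>i. (case i of Inl j \<Rightarrow> \<beta> j | Inr i \<Rightarrow> z i) \<omega>) (K l))) = (\<lambda>i \<omega>. c i * z i \<omega>)"
    by (auto simp: fun_eq_iff f_def K_def)
  ultimately have iv: "indep_vars (\<lambda>_. borel) (\<lambda>i \<omega>. c i * z i \<omega>) I" by simp
  have nd: "distributed M lborel (\<lambda>\<omega>. c i * z i \<omega>) (normal_density 0 \<bar>c i\<bar>)" if "i \<in> I" for i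
  proof -
    have "c i \<noteq> 0" "i < n" using that by (auto simp: I_def)
    from normal_density_affine[OF noise[OF \<open>i < n\<close>], where \<alpha>="c i" and \<beta>=0] \<open>c i \<noteq> 0\<close>
    show ?thesis by simp
  qed
  have "distributed M lborel (\<lambda>x. \<Sum>i\<in>I. c i * z i x) (normal_density (\<Sum>i\<in>I. 0) (sqrt (\<Sum>i\<in>I. \<bar>c i\<bar>\<^sup>2)))"
    by (rule sum_indep_normal[OF fin ne iv]) (auto simp: I_def intro: nd)
  moreover have "(\<Sum>i\<in>I. \<bar>c i\<bar>\<^sup>2) = 1"
  proof -
    have "(\<Sum>i\<in>I. \<bar>c i\<bar>\<^sup>2) = (\<Sum>i\<in>I. c i * c i)"
      by (simp add: power2_eq_square[symmetric])
    also have "\<dots> = (\<Sum>i<n. c i * c i)"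
      by (rule sum.mono_neutral_left[OF _ sub]) (auto simp: I_def)
    finally show ?thesis using c by simp
  qed
  moreover have "(\<lambda>x. \<Sum>i\<in>I. c i * z i x) = (\<lambda>x. \<Sum>i<n. c i * z i x)"
    by (rule ext, rule sum.mono_neutral_left[OF _ sub]) (auto simp: I_def)
  ultimately show ?thesis by simp
qed

lemma w_measure:
  assumes "distributed M lborel w (\<lambda>x. ennreal (std_normal_density x))" "C \<in> sets borel"
  shows "measure M {\<omega> \<in> space M. w \<omega> \<in> C} = measure stdN C"
proof -
  have "emeasure M (w -` C \<inter> space M) = emeasure stdN C"
    using distributed_emeasure[OF assms(1), of C] assms(2) by (simp add: emeasure_stdN)
  moreover have "w -` C \<inter> space M = {\<omega> \<in> space M. w \<omega> \<in> C}" by auto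
  ultimately show ?thesis by (simp add: measure_def)
qed


lemma rv_beta:
  fixes \<beta> z :: "nat \<Rightarrow> 'a \<Rightarrow> real" and n p :: nat
  assumes P: "prob_space M"
    and ind: "prob_space.indep_vars M (\<lambda>_. borel) (\<lambda>v. case v of Inl j \<Rightarrow> \<beta> j | Inr i \<Rightarrow> z i) ({..<p} <+> {..<n})"
    and j: "j < p"
  shows "\<beta> j \<in> borel_measurable M"
proof -
  interpret prob_space M by (rule P)
  from ind[unfolded indep_vars_def] j have "random_variable borel ((\<lambda>v. case v of Inl j \<Rightarrow> \<beta> j | Inr i \<Rightarrow> z i) (Inl j))"
    by blast
  thus ?thesis by simp
qed

lemma decomp_paired:
  fixes \<beta> z :: "nat \<Rightarrow> 'a \<Rightarrow> real" and n p :: nat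
  assumes P: "prob_space M"
    and ind: "prob_space.indep_vars M (\<lambda>_. borel) (\<lambda>v. case v of Inl j \<Rightarrow> \<beta> j | Inr i \<Rightarrow> z i) ({..<p} <+> {..<n})"
    and j: "j < p" and k: "k < p" "k \<noteq> j"
    and wd: "distributed M lborel (\<lambda>\<omega>. \<Sum>i<n. c i * z i \<omega>) (\<lambda>x. ennreal (std_normal_density x))"
    and tot: "measure M {\<omega> \<in> space M. \<beta> k \<omega> = 0} + measure M {\<omega> \<in> space M. \<beta> k \<omega> = \<tau>} = 1"
    and \<tau>: "\<tau> \<noteq> 0"
    and D: "D \<in> sets borel"
  shows "measure M {\<omega> \<in> space M. \<beta> j \<omega> = a \<and> \<beta> j \<omega> + \<rho> * \<beta> k \<omega> + (\<Sum>i<n. c i * z i \<omega>) \<in> D}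
     = measure M {\<omega> \<in> space M. \<beta> j \<omega> = a} * (measure M {\<omega> \<in> space M. \<beta> k \<omega> = 0} * measure stdN {x. a + x \<in> D}
        + measure M {\<omega> \<in> space M. \<beta> k \<omega> = \<tau>} * measure stdN {x. a + \<rho> * \<tau> + x \<in> D})"
proof -
  interpret prob_space M by (rule P)
  define w where "w = (\<lambda>\<omega>. \<Sum>i<n. c i * z i \<omega>)"
  have [measurable]: "\<beta> j \<in> borel_measurable M" "\<beta> k \<in> borel_measurable M"
    using rv_beta[OF P ind] j k by auto
  have [measurable]: "w \<in> borel_measurable M" unfolding w_def using distributed_measurable[OF wd] by simp
  note D[measurable]
  define E where "E = {\<omega> \<in> space M. \<beta> j \<omega> = a \<and> \<beta> j \<omega> + \<rho> * \<beta> k \<omega> + w \<omega> \<in> D}"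
  define E0 where "E0 = {\<omega> \<in> space M. \<beta> j \<omega> \<in> {a} \<and> \<beta> k \<omega> \<in> {0} \<and> w \<omega> \<in> {x. a + x \<in> D}}"
  define E1 where "E1 = {\<omega> \<in> space M. \<beta> j \<omega> \<in> {a} \<and> \<beta> k \<omega> \<in> {\<tau>} \<and> w \<omega> \<in> {x. a + \<rho> * \<tau> + x \<in> D}}"
  define N where "N = {\<omega> \<in> space M. \<beta> k \<omega> \<noteq> 0 \<and> \<beta> k \<omega> \<noteq> \<tau>}"
  have mE: "E \<in> events" "E0 \<in> events" "E1 \<in> events" "N \<in> events"
    unfolding E_def E0_def E1_def N_def by measurable
  have D0: "{x. a + x \<in> D} \<in> sets borel" "{x. a + \<rho> * \<tau> + x \<in> D} \<in> sets borel" by measurable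
  have N0: "prob N = 0"
  proof -
    have "space M = {\<omega> \<in> space M. \<beta> k \<omega> = 0} \<union> {\<omega> \<in> space M. \<beta> k \<omega> = \<tau>} \<union> N"
      by (auto simp: N_def)
    moreover have m0: "{\<omega> \<in> space M. \<beta> k \<omega> = 0} \<in> events" "{\<omega> \<in> space M. \<beta> k \<omega> = \<tau>} \<in> events"
      by measurable
    moreover have "prob ({\<omega> \<in> space M. \<beta> k \<omega> = 0} \<union> {\<omega> \<in> space M. \<beta> k \<omega> = \<tau>} \<union> N)
        = prob ({\<omega> \<in> space M. \<beta> k \<omega> = 0} \<union> {\<omega> \<in> space M. \<beta> k \<omega> = \<tau>}) + prob N"
      using m0 mE(4) by (intro finite_measure_Union) (auto simp: N_def)
    moreover have "prob ({\<omega> \<in> space M. \<beta> k \<omega> = 0} \<union> {\<omega> \<in> space M. \<beta> k \<omega> = \<tau>})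
        = prob {\<omega> \<in> space M. \<beta> k \<omega> = 0} + prob {\<omega> \<in> space M. \<beta> k \<omega> = \<tau>}"
      using m0 \<tau> by (intro finite_measure_Union) auto
    ultimately have "prob (space M) = prob {\<omega> \<in> space M. \<beta> k \<omega> = 0} + prob {\<omega> \<in> space M. \<beta> k \<omega> = \<tau>} + prob N"
      by simp
    thus ?thesis using tot prob_space by simp
  qed
  have disj: "E0 \<inter> E1 = {}" using \<tau> by (auto simp: E0_def E1_def)
  have up: "E \<subseteq> (E0 \<union> E1) \<union> N" by (auto simp: E_def E0_def E1_def N_def)
  have lo: "E0 \<union> E1 \<subseteq> E" by (auto simp: E_def E0_def E1_def)
  have "prob E \<le> prob ((E0 \<union> E1) \<union> N)" using mE up by (intro finite_measure_mono) auto
  also have "\<dots> \<le> prob (E0 \<union> E1) + prob N" using mE by (intro measure_Un_le) auto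
  finally have "prob E \<le> prob (E0 \<union> E1)" using N0 by simp
  moreover have "prob (E0 \<union> E1) \<le> prob E" using mE lo by (intro finite_measure_mono) auto
  ultimately have "prob E = prob (E0 \<union> E1)" by simp
  also have "\<dots> = prob E0 + prob E1" using mE disj by (intro finite_measure_Union) auto
  also have "prob E0 = prob {\<omega> \<in> space M. \<beta> j \<omega> \<in> {a}} * prob {\<omega> \<in> space M. \<beta> k \<omega> \<in> {0}} * prob {\<omega> \<in> space M. w \<omega> \<in> {x. a + x \<in> D}}"
    unfolding E0_def w_def by (rule prob3[OF P ind j k]) (use D0 in auto)
  also have "prob E1 = prob {\<omega> \<in> space M. \<beta> j \<omega> \<in> {a}} * prob {\<omega> \<in> space M. \<beta> k \<omega> \<in> {\<tau>}} * prob {\<omega> \<in> space M. w \<omega> \<in> {x. a + \<rho> * \<tau> + x \<in> D}}"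
    unfolding E1_def w_def by (rule prob3[OF P ind j k]) (use D0 in auto)
  also have "prob {\<omega> \<in> space M. w \<omega> \<in> {x. a + x \<in> D}} = measure stdN {x. a + x \<in> D}"
    unfolding w_def by (rule w_measure[OF wd D0(1)])
  also have "prob {\<omega> \<in> space M. w \<omega> \<in> {x. a + \<rho> * \<tau> + x \<in> D}} = measure stdN {x. a + \<rho> * \<tau> + x \<in> D}"
    unfolding w_def by (rule w_measure[OF wd D0(2)])
  finally show ?thesis unfolding E_def w_def by (simp add: algebra_simps)
qed

lemma decomp_single:
  fixes \<beta> z :: "nat \<Rightarrow> 'a \<Rightarrow> real" and n p :: nat
  assumes P: "prob_space M"
    and ind: "prob_space.indep_vars M (\<lambda>_. borel) (\<lambda>v. case v of Inl j \<Rightarrow> \<beta> j | Inr i \<Rightarrow> z i) ({..<p} <+> {..<n})"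
    and j: "j < p"
    and wd: "distributed M lborel (\<lambda>\<omega>. \<Sum>i<n. c i * z i \<omega>) (\<lambda>x. ennreal (std_normal_density x))"
    and D: "D \<in> sets borel"
  shows "measure M {\<omega> \<in> space M. \<beta> j \<omega> = a \<and> \<beta> j \<omega> + (\<Sum>i<n. c i * z i \<omega>) \<in> D}
     = measure M {\<omega> \<in> space M. \<beta> j \<omega> = a} * measure stdN {x. a + x \<in> D}"
proof -
  have D0: "{x. a + x \<in> D} \<in> sets borel" using D by measurable
  have "{\<omega> \<in> space M. \<beta> j \<omega> = a \<and> \<beta> j \<omega> + (\<Sum>i<n. c i * z i \<omega>) \<in> D}
     = {\<omega> \<in> space M. \<beta> j \<omega> \<in> {a} \<and> (\<Sum>i<n. c i * z i \<omega>) \<in> {x. a + x \<in> D}}" by auto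
  moreover have "measure M {\<omega> \<in> space M. \<beta> j \<omega> \<in> {a} \<and> (\<Sum>i<n. c i * z i \<omega>) \<in> {x. a + x \<in> D}}
     = measure M {\<omega> \<in> space M. \<beta> j \<omega> \<in> {a}} * measure M {\<omega> \<in> space M. (\<Sum>i<n. c i * z i \<omega>) \<in> {x. a + x \<in> D}}"
    by (rule prob2[OF P ind j]) (use D0 in auto)
  moreover have "measure M {\<omega> \<in> space M. (\<Sum>i<n. c i * z i \<omega>) \<in> {x. a + x \<in> D}} = measure stdN {x. a + x \<in> D}"
    by (rule w_measure[OF wd D0])
  ultimately show ?thesis by simp
qed


definition pt :: "nat \<Rightarrow> nat" where "pt j = (if even j then j + 1 else j - 1)"
lemma pt_neq: "pt j \<noteq> j" unfolding pt_def by (cases "even j") (auto elim: oddE)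
lemma div2_iff: "((k::nat) div 2 = m) = (k = 2*m \<or> k = 2*m+1)" by presburger
lemma gram_off: "k \<noteq> j \<Longrightarrow> block_gram \<rho> j k = (if k = pt j then \<rho> else 0)"
proof -
  assume kj: "k \<noteq> j"
  have "(j div 2 = k div 2) = (k = pt j)"
  proof (cases "even j")
    case True
    then obtain m where m: "j = 2*m" by (auto elim: evenE)
    show ?thesis using kj unfolding pt_def m using div2_iff[of k m] by auto
  next
    case False
    then obtain m where m: "j = 2*m+1" by (auto elim: oddE)
    show ?thesis using kj unfolding pt_def m using div2_iff[of k m] by auto
  qed
  thus ?thesis using kj unfolding block_gram_def by simp
qed

lemma pt_le: "pt j \<le> j + 1" by (auto simp: pt_def)

lemma score_eq:
  assumes gram: "\<And>j k. j < p \<Longrightarrow> k < p \<Longrightarrow> (\<Sum>i<n. X i j * X i k) = block_gram \<rho> j k"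
    and j: "j < p"
  shows "marg_score X n p \<beta> z j \<omega> = \<beta> j \<omega> + (if pt j < p then \<rho> * \<beta> (pt j) \<omega> else 0) + (\<Sum>i<n. X i j * z i \<omega>)"
proof -
  have "marg_score X n p \<beta> z j \<omega> = (\<Sum>i<n. \<Sum>k<p. X i j * X i k * \<beta> k \<omega>) + (\<Sum>i<n. X i j * z i \<omega>)"
    unfolding marg_score_def by (simp add: distrib_left sum.distrib sum_distrib_left mult.assoc)
  also have "(\<Sum>i<n. \<Sum>k<p. X i j * X i k * \<beta> k \<omega>) = (\<Sum>k<p. (\<Sum>i<n. X i j * X i k) * \<beta> k \<omega>)"
    by (subst sum.swap) (simp add: sum_distrib_right)
  also have "\<dots> = (\<Sum>k<p. block_gram \<rho> j k * \<beta> k \<omega>)"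
    using gram j by (intro sum.cong) auto
  also have "\<dots> = block_gram \<rho> j j * \<beta> j \<omega> + (\<Sum>k\<in>{..<p} - {j}. block_gram \<rho> j k * \<beta> k \<omega>)"
    using j by (subst sum.remove[of _ j]) auto
  also have "(\<Sum>k\<in>{..<p} - {j}. block_gram \<rho> j k * \<beta> k \<omega>) = (\<Sum>k\<in>{..<p} - {j}. if k = pt j then \<rho> * \<beta> (pt j) \<omega> else 0)"
    by (intro sum.cong) (auto simp: gram_off)
  also have "\<dots> = (if pt j < p then \<rho> * \<beta> (pt j) \<omega> else 0)"
    using pt_neq[of j] by (subst sum.delta) auto
  finally show ?thesis by (simp add: block_gram_def)
qed

lemma sum_count:
  fixes f :: "nat \<Rightarrow> real"
  assumes p: "p \<ge> 1" and eq: "\<And>j. j < p - 1 \<Longrightarrow> f j = F" and bd: "\<And>j. j < p \<Longrightarrow> 0 \<le> f j \<and> f j \<le> 2 * F"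
  shows "real (p - 1) * F \<le> (\<Sum>j<p. f j) \<and> (\<Sum>j<p. f j) \<le> 2 * real p * F"
proof
  have "real (p - 1) * F = (\<Sum>j<p - 1. f j)" using eq by simp
  also have "\<dots> \<le> (\<Sum>j<p. f j)" using bd by (intro sum_mono2) auto
  finally show "real (p - 1) * F \<le> (\<Sum>j<p. f j)" .
  have "(\<Sum>j<p. f j) \<le> (\<Sum>j<p. 2 * F)" using bd by (intro sum_mono) auto
  thus "(\<Sum>j<p. f j) \<le> 2 * real p * F" by simp
qed

definition Aout :: "real \<Rightarrow> real \<Rightarrow> nat \<Rightarrow> real" where
  "Aout a b p = measure stdN {x. b * sp p < \<bar>a * sp p + x\<bar>}"
definition Ain :: "real \<Rightarrow> real \<Rightarrow> nat \<Rightarrow> real" where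
  "Ain a b p = measure stdN {x. \<not> b * sp p < \<bar>a * sp p + x\<bar>}"

lemma Q_nonneg: "measure stdN A \<ge> 0" by simp

lemma per_p:
  fixes \<beta> z :: "nat \<Rightarrow> 'a \<Rightarrow> real" and n p :: nat and X :: "nat \<Rightarrow> nat \<Rightarrow> real"
  assumes p: "p \<ge> 2" and P: "prob_space M" and r: "r > 0" and t': "t' > 0"
    and gram: "\<And>j k. j < p \<Longrightarrow> k < p \<Longrightarrow> (\<Sum>i<n. X i j * X i k) = block_gram \<rho> j k"
    and ind: "prob_space.indep_vars M (\<lambda>_. borel) (\<lambda>v. case v of Inl j \<Rightarrow> \<beta> j | Inr i \<Rightarrow> z i) ({..<p} <+> {..<n})"
    and noise: "\<And>i. i < n \<Longrightarrow> distributed M lborel (z i) (\<lambda>x. ennreal (std_normal_density x))"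
    and bnz: "\<And>j. j < p \<Longrightarrow> measure M {\<omega> \<in> space M. \<beta> j \<omega> = sqrt (2 * r * ln (real p))} = q"
    and bz: "\<And>j. j < p \<Longrightarrow> measure M {\<omega> \<in> space M. \<beta> j \<omega> = 0} = 1 - q"
    and q: "q \<ge> 0" "q \<le> 1/2"
  shows "real (p - 1) * ((1 - q) * ((1 - q) * Aout 0 t' p + q * Aout (\<rho> * sqrt r) t' p))
          \<le> (\<Sum>j<p. measure M {\<omega> \<in> space M. \<beta> j \<omega> = 0 \<and>
               \<bar>marg_score X n p \<beta> z j \<omega>\<bar> > t' * sqrt (2 * ln (real p))})
      \<and> (\<Sum>j<p. measure M {\<omega> \<in> space M. \<beta> j \<omega> = 0 \<and>
               \<bar>marg_score X n p \<beta> z j \<omega>\<bar> > t' * sqrt (2 * ln (real p))})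
          \<le> 2 * real p * ((1 - q) * ((1 - q) * Aout 0 t' p + q * Aout (\<rho> * sqrt r) t' p))"
    and "real (p - 1) * (q * ((1 - q) * Ain (sqrt r) t' p + q * Ain ((1 + \<rho>) * sqrt r) t' p))
          \<le> (\<Sum>j<p. measure M {\<omega> \<in> space M. \<beta> j \<omega> = sqrt (2 * r * ln (real p)) \<and>
               \<not> \<bar>marg_score X n p \<beta> z j \<omega>\<bar> > t' * sqrt (2 * ln (real p))})
      \<and> (\<Sum>j<p. measure M {\<omega> \<in> space M. \<beta> j \<omega> = sqrt (2 * r * ln (real p)) \<and>
               \<not> \<bar>marg_score X n p \<beta> z j \<omega>\<bar> > t' * sqrt (2 * ln (real p))})
          \<le> 2 * real p * (q * ((1 - q) * Ain (sqrt r) t' p + q * Ain ((1 + \<rho>) * sqrt r) t' p))"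
proof -
  define \<tau> where "\<tau> = sqrt (2 * r * ln (real p))"
  have \<tau>s: "\<tau> = sqrt r * sp p" unfolding \<tau>_def by (simp add: real_sqrt_mult[symmetric] mult.assoc)
  have lnp: "ln (real p) > 0" using p by simp
  have \<tau>0: "\<tau> \<noteq> 0" unfolding \<tau>_def using r lnp by simp
  define Dout where "Dout = {s::real. t' * sp p < \<bar>s\<bar>}"
  define Din where "Din = {s::real. \<not> t' * sp p < \<bar>s\<bar>}"
  have mD: "Dout \<in> sets borel" "Din \<in> sets borel" unfolding Dout_def Din_def by measurable
  have wd: "distributed M lborel (\<lambda>\<omega>. \<Sum>i<n. X i j * z i \<omega>) (\<lambda>x. ennreal (std_normal_density x))" if "j < p" for j
    by (rule w_normal[OF P ind noise]) (use gram[OF that that] in \<open>auto simp: block_gram_def\<close>)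
  have tot: "measure M {\<omega> \<in> space M. \<beta> k \<omega> = 0} + measure M {\<omega> \<in> space M. \<beta> k \<omega> = \<tau>} = 1" if "k < p" for k
    using bz[OF that] bnz[OF that] unfolding \<tau>_def by simp
  have A0: "measure stdN {x. 0 + x \<in> Dout} = Aout 0 t' p" unfolding Aout_def Dout_def by simp
  have A1: "measure stdN {x. 0 + \<rho> * \<tau> + x \<in> Dout} = Aout (\<rho> * sqrt r) t' p" unfolding Aout_def Dout_def \<tau>s
    by (simp add: mult.assoc)
  have C0: "measure stdN {x. \<tau> + x \<in> Din} = Ain (sqrt r) t' p" unfolding Ain_def Din_def \<tau>s by simp
  have C1: "measure stdN {x. \<tau> + \<rho> * \<tau> + x \<in> Din} = Ain ((1 + \<rho>) * sqrt r) t' p" unfolding Ain_def Din_def \<tau>s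
    by (simp add: algebra_simps)
  define F where "F = (1 - q) * ((1 - q) * Aout 0 t' p + q * Aout (\<rho> * sqrt r) t' p)"
  define H where "H = q * ((1 - q) * Ain (sqrt r) t' p + q * Ain ((1 + \<rho>) * sqrt r) t' p)"
  have Ano: "Aout a b p \<ge> 0" "Ain a b p \<ge> 0" for a b by (simp_all add: Aout_def Ain_def)
  have term1: "measure M {\<omega> \<in> space M. \<beta> j \<omega> = 0 \<and> \<bar>marg_score X n p \<beta> z j \<omega>\<bar> > t' * sqrt (2 * ln (real p))}
     = (if pt j < p then F else (1 - q) * Aout 0 t' p)" if j: "j < p" for j
  proof (cases "pt j < p")
    case True
    have "{\<omega> \<in> space M. \<beta> j \<omega> = 0 \<and> \<bar>marg_score X n p \<beta> z j \<omega>\<bar> > t' * sqrt (2 * ln (real p))}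
       = {\<omega> \<in> space M. \<beta> j \<omega> = 0 \<and> \<beta> j \<omega> + \<rho> * \<beta> (pt j) \<omega> + (\<Sum>i<n. X i j * z i \<omega>) \<in> Dout}"
      using score_eq[OF gram j, of \<beta> z] True by (auto simp: Dout_def)
    also have "measure M \<dots> = (1 - q) * ((1 - q) * Aout 0 t' p + q * Aout (\<rho> * sqrt r) t' p)"
      apply (subst decomp_paired[OF P ind j True pt_neq wd[OF j] tot[OF True] \<tau>0 mD(1)])
      using bz[OF j] bz[OF True] bnz[OF True] A0 A1 unfolding \<tau>_def by simp
    finally show ?thesis using True by (simp add: F_def)
  next
    case False
    have "{\<omega> \<in> space M. \<beta> j \<omega> = 0 \<and> \<bar>marg_score X n p \<beta> z j \<omega>\<bar> > t' * sqrt (2 * ln (real p))}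
       = {\<omega> \<in> space M. \<beta> j \<omega> = 0 \<and> \<beta> j \<omega> + (\<Sum>i<n. X i j * z i \<omega>) \<in> Dout}"
      using score_eq[OF gram j, of \<beta> z] False by (auto simp: Dout_def)
    also have "measure M \<dots> = (1 - q) * Aout 0 t' p"
      apply (subst decomp_single[OF P ind j wd[OF j] mD(1)])
      using bz[OF j] A0 by simp
    finally show ?thesis using False by simp
  qed
  have term2: "measure M {\<omega> \<in> space M. \<beta> j \<omega> = sqrt (2 * r * ln (real p)) \<and> \<not> \<bar>marg_score X n p \<beta> z j \<omega>\<bar> > t' * sqrt (2 * ln (real p))}
     = (if pt j < p then H else q * Ain (sqrt r) t' p)" if j: "j < p" for j
  proof (cases "pt j < p")
    case True
    have "{\<omega> \<in> space M. \<beta> j \<omega> = sqrt (2 * r * ln (real p)) \<and> \<not> \<bar>marg_score X n p \<beta> z j \<omega>\<bar> > t' * sqrt (2 * ln (real p))}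
       = {\<omega> \<in> space M. \<beta> j \<omega> = \<tau> \<and> \<beta> j \<omega> + \<rho> * \<beta> (pt j) \<omega> + (\<Sum>i<n. X i j * z i \<omega>) \<in> Din}"
      using score_eq[OF gram j, of \<beta> z] True by (auto simp: Din_def \<tau>_def)
    also have "measure M \<dots> = q * ((1 - q) * Ain (sqrt r) t' p + q * Ain ((1 + \<rho>) * sqrt r) t' p)"
      apply (subst decomp_paired[OF P ind j True pt_neq wd[OF j] tot[OF True] \<tau>0 mD(2)])
      using bnz[OF j] bz[OF True] bnz[OF True] C0 C1 unfolding \<tau>_def by simp
    finally show ?thesis using True by (simp add: H_def)
  next
    case False
    have "{\<omega> \<in> space M. \<beta> j \<omega> = sqrt (2 * r * ln (real p)) \<and> \<not> \<bar>marg_score X n p \<beta> z j \<omega>\<bar> > t' * sqrt (2 * ln (real p))}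
       = {\<omega> \<in> space M. \<beta> j \<omega> = \<tau> \<and> \<beta> j \<omega> + (\<Sum>i<n. X i j * z i \<omega>) \<in> Din}"
      using score_eq[OF gram j, of \<beta> z] False by (auto simp: Din_def \<tau>_def)
    also have "measure M \<dots> = q * Ain (sqrt r) t' p"
      apply (subst decomp_single[OF P ind j wd[OF j] mD(2)])
      using bnz[OF j] C0 unfolding \<tau>_def by simp
    finally show ?thesis using False by simp
  qed
  have q1: "1 - q \<ge> 1/2" using q by simp
  show "real (p - 1) * F \<le> (\<Sum>j<p. measure M {\<omega> \<in> space M. \<beta> j \<omega> = 0 \<and>
               \<bar>marg_score X n p \<beta> z j \<omega>\<bar> > t' * sqrt (2 * ln (real p))})
      \<and> (\<Sum>j<p. measure M {\<omega> \<in> space M. \<beta> j \<omega> = 0 \<and>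
               \<bar>marg_score X n p \<beta> z j \<omega>\<bar> > t' * sqrt (2 * ln (real p))}) \<le> 2 * real p * F"
  proof (rule sum_count)
    show "1 \<le> p" using p by simp
    fix j assume "j < p - 1"
    hence "j < p" "pt j < p" using pt_le[of j] by auto
    thus "measure M {\<omega> \<in> space M. \<beta> j \<omega> = 0 \<and> \<bar>marg_score X n p \<beta> z j \<omega>\<bar> > t' * sqrt (2 * ln (real p))} = F"
      using term1 by simp
  next
    fix j assume j: "j < p"
    have "(1 - q) * Aout 0 t' p \<le> 2 * F"
    proof -
      have x0: "0 \<le> (1 - q) * Aout 0 t' p" using q1 Ano by simp
      have "1/2 * ((1 - q) * Aout 0 t' p) \<le> (1 - q) * ((1 - q) * Aout 0 t' p)"
        by (rule mult_right_mono[OF q1 x0])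
      moreover have "0 \<le> (1 - q) * (q * Aout (\<rho> * sqrt r) t' p)" using q q1 Ano by simp
      moreover have "F = (1 - q) * ((1 - q) * Aout 0 t' p) + (1 - q) * (q * Aout (\<rho> * sqrt r) t' p)"
        unfolding F_def by (simp add: distrib_left)
      ultimately show ?thesis by linarith
    qed
    moreover have "0 \<le> F" unfolding F_def using q q1 Ano by simp
    moreover hence "F \<le> 2 * F" by simp
    ultimately show "0 \<le> measure M {\<omega> \<in> space M. \<beta> j \<omega> = 0 \<and> \<bar>marg_score X n p \<beta> z j \<omega>\<bar> > t' * sqrt (2 * ln (real p))} \<and>
      measure M {\<omega> \<in> space M. \<beta> j \<omega> = 0 \<and> \<bar>marg_score X n p \<beta> z j \<omega>\<bar> > t' * sqrt (2 * ln (real p))} \<le> 2 * F"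
      using term1[OF j] q1 Ano by auto
  qed
  show "real (p - 1) * H \<le> (\<Sum>j<p. measure M {\<omega> \<in> space M. \<beta> j \<omega> = sqrt (2 * r * ln (real p)) \<and>
               \<not> \<bar>marg_score X n p \<beta> z j \<omega>\<bar> > t' * sqrt (2 * ln (real p))})
      \<and> (\<Sum>j<p. measure M {\<omega> \<in> space M. \<beta> j \<omega> = sqrt (2 * r * ln (real p)) \<and>
               \<not> \<bar>marg_score X n p \<beta> z j \<omega>\<bar> > t' * sqrt (2 * ln (real p))}) \<le> 2 * real p * H"
  proof (rule sum_count)
    show "1 \<le> p" using p by simp
    fix j assume "j < p - 1"
    hence "j < p" "pt j < p" using pt_le[of j] by auto
    thus "measure M {\<omega> \<in> space M. \<beta> j \<omega> = sqrt (2 * r * ln (real p)) \<and> \<not> \<bar>marg_score X n p \<beta> z j \<omega>\<bar> > t' * sqrt (2 * ln (real p))} = H"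
      using term2 by simp
  next
    fix j assume j: "j < p"
    have "q * Ain (sqrt r) t' p \<le> 2 * H"
    proof -
      have x0: "0 \<le> q * Ain (sqrt r) t' p" using q Ano by simp
      have "1/2 * (q * Ain (sqrt r) t' p) \<le> (1 - q) * (q * Ain (sqrt r) t' p)"
        by (rule mult_right_mono[OF q1 x0])
      moreover have "0 \<le> q * (q * Ain ((1 + \<rho>) * sqrt r) t' p)" using q Ano by simp
      moreover have "H = (1 - q) * (q * Ain (sqrt r) t' p) + q * (q * Ain ((1 + \<rho>) * sqrt r) t' p)"
        unfolding H_def by (simp add: algebra_simps)
      ultimately show ?thesis by linarith
    qed
    moreover have "0 \<le> H" unfolding H_def using q q1 Ano by simp
    moreover hence "H \<le> 2 * H" by simp
    ultimately show "0 \<le> measure M {\<omega> \<in> space M. \<beta> j \<omega> = sqrt (2 * r * ln (real p)) \<and> \<not> \<bar>marg_score X n p \<beta> z j \<omega>\<bar> > t' * sqrt (2 * ln (real p))} \<and>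
      measure M {\<omega> \<in> space M. \<beta> j \<omega> = sqrt (2 * r * ln (real p)) \<and> \<not> \<bar>marg_score X n p \<beta> z j \<omega>\<bar> > t' * sqrt (2 * ln (real p))} \<le> 2 * H"
      using term2[OF j] q Ano by auto
  qed
qed


theorem theoremC1:
  fixes M :: "nat \<Rightarrow> 'a measure"
    and n :: "nat \<Rightarrow> nat"
    and X :: "nat \<Rightarrow> nat \<Rightarrow> nat \<Rightarrow> real"
    and \<beta> z :: "nat \<Rightarrow> nat \<Rightarrow> 'a \<Rightarrow> real"
    and \<rho> \<theta> r t' :: real
  assumes rho: "-1 < \<rho>" "\<rho> < 1"
    and theta: "0 < \<theta>" "\<theta> < 1"
    and r: "r > 0"
    and t': "t' > 0"
    and prob: "\<And>p. p \<ge> 2 \<Longrightarrow> prob_space (M p)"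
    and gram: "\<And>p j k. p \<ge> 2 \<Longrightarrow> j < p \<Longrightarrow> k < p \<Longrightarrow>
               (\<Sum>i<n p. X p i j * X p i k) = block_gram \<rho> j k"
    and indep: "\<And>p. p \<ge> 2 \<Longrightarrow> prob_space.indep_vars (M p) (\<lambda>_. borel)
               (\<lambda>v. case v of Inl j \<Rightarrow> \<beta> p j | Inr i \<Rightarrow> z p i) ({..<p} <+> {..<n p})"
    and noise: "\<And>p i. p \<ge> 2 \<Longrightarrow> i < n p \<Longrightarrow>
               distributed (M p) lborel (z p i) (\<lambda>x. ennreal (std_normal_density x))"
    and beta_nz: "\<And>p j. p \<ge> 2 \<Longrightarrow> j < p \<Longrightarrow>
               measure (M p) {\<omega> \<in> space (M p). \<beta> p j \<omega> = sqrt (2 * r * ln (real p))}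
                 = real p powr (-\<theta>)"
    and beta_z: "\<And>p j. p \<ge> 2 \<Longrightarrow> j < p \<Longrightarrow>
               measure (M p) {\<omega> \<in> space (M p). \<beta> p j \<omega> = 0} = 1 - real p powr (-\<theta>)"
  shows "multi_log (\<lambda>p.
           (\<Sum>j<p. measure (M p) {\<omega> \<in> space (M p). \<beta> p j \<omega> = 0 \<and>
               \<bar>marg_score (X p) (n p) p (\<beta> p) (z p) j \<omega>\<bar> > t' * sqrt (2 * ln (real p))})
           / real p powr (1 - min (t'\<^sup>2) (\<theta> + (max 0 (t' - \<bar>\<rho>\<bar> * sqrt r))\<^sup>2)))
       \<and> multi_log (\<lambda>p.
           (\<Sum>j<p. measure (M p) {\<omega> \<in> space (M p). \<beta> p j \<omega> = sqrt (2 * r * ln (real p)) \<and>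
               \<not> \<bar>marg_score (X p) (n p) p (\<beta> p) (z p) j \<omega>\<bar> > t' * sqrt (2 * ln (real p))})
           / real p powr (1 - min (\<theta> + (max 0 (sqrt r - t'))\<^sup>2)
                                   (2 * \<theta> + (max 0 ((1 + \<rho>) * sqrt r - t'))\<^sup>2)))"
proof -
  define q where "q = (\<lambda>p::nat. real p powr (-\<theta>))"
  define Fp where "Fp = (\<lambda>p. (1 - q p) * ((1 - q p) * Aout 0 t' p + q p * Aout (\<rho> * sqrt r) t' p))"
  define Hp where "Hp = (\<lambda>p. q p * ((1 - q p) * Ain (sqrt r) t' p + q p * Ain ((1 + \<rho>) * sqrt r) t' p))"
  define S1 where "S1 = (\<lambda>p. \<Sum>j<p. measure (M p) {\<omega> \<in> space (M p). \<beta> p j \<omega> = 0 \<and>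
               \<bar>marg_score (X p) (n p) p (\<beta> p) (z p) j \<omega>\<bar> > t' * sqrt (2 * ln (real p))})"
  define S2 where "S2 = (\<lambda>p. \<Sum>j<p. measure (M p) {\<omega> \<in> space (M p). \<beta> p j \<omega> = sqrt (2 * r * ln (real p)) \<and>
               \<not> \<bar>marg_score (X p) (n p) p (\<beta> p) (z p) j \<omega>\<bar> > t' * sqrt (2 * ln (real p))})"
  have evq: "eventually (\<lambda>p. q p < 1/2) sequentially"
    unfolding q_def using P2[OF theta(1)] by (rule order_tendstoD) simp
  have ev2: "eventually (\<lambda>p::nat. p \<ge> 2) sequentially" by (rule eventually_ge_at_top)
  have q0: "q p \<ge> 0" for p unfolding q_def by simp
  have bounds: "eventually (\<lambda>p. (real (p - 1) * Fp p \<le> S1 p \<and> S1 p \<le> 2 * real p * Fp p)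
      \<and> (real (p - 1) * Hp p \<le> S2 p \<and> S2 p \<le> 2 * real p * Hp p)) sequentially"
    using evq ev2
  proof eventually_elim
    case (elim p)
    have pp: "prob_space (M p)" using prob elim by simp
    have g: "\<And>j k. j < p \<Longrightarrow> k < p \<Longrightarrow> (\<Sum>i<n p. X p i j * X p i k) = block_gram \<rho> j k"
      using gram elim(2) by blast
    have ns: "\<And>i. i < n p \<Longrightarrow> distributed (M p) lborel (z p i) (\<lambda>x. ennreal (std_normal_density x))"
      using noise elim(2) by blast
    have bn: "\<And>j. j < p \<Longrightarrow> measure (M p) {\<omega> \<in> space (M p). \<beta> p j \<omega> = sqrt (2 * r * ln (real p))} = q p"
      using beta_nz elim(2) unfolding q_def by blast
    have bz: "\<And>j. j < p \<Longrightarrow> measure (M p) {\<omega> \<in> space (M p). \<beta> p j \<omega> = 0} = 1 - q p"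
      using beta_z elim(2) unfolding q_def by blast
    note pr = per_p[OF elim(2) pp r t' g indep[OF elim(2)] ns bn bz q0 less_imp_le[OF elim(1)]]
    show ?case using pr unfolding Fp_def Hp_def S1_def S2_def by blast
  qed
  have r1q: "rate (\<lambda>p. 1 - q p) 0"
  proof (rule rate_squeeze[OF rate_const[of "1/2"] rate_const[of 1]])
    show "eventually (\<lambda>p. 1/2 \<le> 1 - q p \<and> 1 - q p \<le> 1) sequentially"
      using evq by eventually_elim (use q0 in auto)
  qed auto
  have rq: "rate q (-\<theta>)" unfolding q_def by (rule rate_powr)
  have rA0: "rate (Aout 0 t') (-(max 0 (t' - \<bar>0\<bar>))\<^sup>2)"
    unfolding Aout_def[abs_def] by (rule rate_Aout[OF t'])
  have rA1: "rate (Aout (\<rho> * sqrt r) t') (-(max 0 (t' - \<bar>\<rho> * sqrt r\<bar>))\<^sup>2)"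
    unfolding Aout_def[abs_def] by (rule rate_Aout[OF t'])
  have rC0: "rate (Ain (sqrt r) t') (-(max 0 (sqrt r - t'))\<^sup>2)"
    unfolding Ain_def[abs_def] by (rule rate_Ain) (use r t' in auto)
  have rC1: "rate (Ain ((1 + \<rho>) * sqrt r) t') (-(max 0 ((1 + \<rho>) * sqrt r - t'))\<^sup>2)"
    unfolding Ain_def[abs_def] by (rule rate_Ain) (use r t' rho in auto)
  have rF: "rate Fp (0 + max (0 + -(max 0 (t' - \<bar>0\<bar>))\<^sup>2) (-\<theta> + -(max 0 (t' - \<bar>\<rho> * sqrt r\<bar>))\<^sup>2))"
    unfolding Fp_def by (intro rate_mult rate_add r1q rq rA0 rA1)
  have rH: "rate Hp (-\<theta> + max (0 + -(max 0 (sqrt r - t'))\<^sup>2) (-\<theta> + -(max 0 ((1 + \<rho>) * sqrt r - t'))\<^sup>2))"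
    unfolding Hp_def by (intro rate_mult rate_add r1q rq rC0 rC1)
  have sq: "rate S (1 + e)" if rG: "rate G e" and ev: "eventually (\<lambda>p. real (p - 1) * G p \<le> S p \<and> S p \<le> 2 * real p * G p) sequentially"
    for G S e
  proof (rule rate_squeeze)
    show "rate (\<lambda>p. 1/2 * (real p powr 1 * G p)) (1 + e)"
      by (intro rate_cmult rate_mult rate_powr rG) simp
    show "rate (\<lambda>p. 2 * (real p powr 1 * G p)) (1 + e)"
      by (intro rate_cmult rate_mult rate_powr rG) simp
    show "eventually (\<lambda>p. 1/2 * (real p powr 1 * G p) \<le> S p \<and> S p \<le> 2 * (real p powr 1 * G p)) sequentially"
      using ev ev2 rate_pos[OF rG]
    proof eventually_elim
      case (elim p)
      have pw: "real p powr 1 = real p" using elim by simp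
      have "1/2 * (real p powr 1 * G p) = (real p / 2) * G p" using elim by simp
      also have "\<dots> \<le> real (p - 1) * G p" using elim by (intro mult_right_mono) auto
      finally have low: "1/2 * (real p powr 1 * G p) \<le> real (p - 1) * G p" .
      show ?case using low elim(1) unfolding pw by (auto simp: mult.assoc)
    qed
  qed
  have e1: "1 + (0 + max (0 + -(max 0 (t' - \<bar>0\<bar>))\<^sup>2) (-\<theta> + -(max 0 (t' - \<bar>\<rho> * sqrt r\<bar>))\<^sup>2))
      = 1 - min (t'\<^sup>2) (\<theta> + (max 0 (t' - \<bar>\<rho>\<bar> * sqrt r))\<^sup>2)"
  proof -
    have a1: "\<bar>\<rho> * sqrt r\<bar> = \<bar>\<rho>\<bar> * sqrt r" using r by (simp add: abs_mult)
    have a2: "max 0 (t' - \<bar>0\<bar>) = t'" using t' by simp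
    have gen: "\<And>x y::real. 1 + (0 + max (0 + -x) (-\<theta> + -y)) = 1 - min x (\<theta> + y)"
      by (simp add: max_def min_def)
    show ?thesis unfolding a1 a2 by (rule gen)
  qed
  have e2: "1 + (-\<theta> + max (0 + -(max 0 (sqrt r - t'))\<^sup>2) (-\<theta> + -(max 0 ((1 + \<rho>) * sqrt r - t'))\<^sup>2))
      = 1 - min (\<theta> + (max 0 (sqrt r - t'))\<^sup>2) (2 * \<theta> + (max 0 ((1 + \<rho>) * sqrt r - t'))\<^sup>2)"
  proof -
    have gen: "\<And>x y::real. 1 + (-\<theta> + max (0 + -x) (-\<theta> + -y)) = 1 - min (\<theta> + x) (2 * \<theta> + y)"
      by (simp add: max_def min_def)
    show ?thesis by (rule gen)
  qed
  have "rate S1 (1 - min (t'\<^sup>2) (\<theta> + (max 0 (t' - \<bar>\<rho>\<bar> * sqrt r))\<^sup>2))"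
    unfolding e1[symmetric] by (rule sq[OF rF]) (use bounds in \<open>auto elim: eventually_mono\<close>)
  moreover have "rate S2 (1 - min (\<theta> + (max 0 (sqrt r - t'))\<^sup>2) (2 * \<theta> + (max 0 ((1 + \<rho>) * sqrt r - t'))\<^sup>2))"
    unfolding e2[symmetric] by (rule sq[OF rH]) (use bounds in \<open>auto elim: eventually_mono\<close>)
  ultimately show ?thesis unfolding S1_def S2_def by (intro conjI rate_multi_log)
qed


end
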